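(* Let $n\ge1$, let $\mathbf u(z),\mathbf v(z)\in\mathbb R^n$ be column vector functions, and let $A$ be a constant real skew-symmetric $n\times n$ matrix. Define the block matrices of block size $(1,n,1)\times(1,n,1)$ \[ {\cal B}_0=\begin{pmatrix} -1 & 0 & 0\\ 0 & 0 & 0\\ 0 & 0 & 1 \end{pmatrix},\quad {\cal B}_1=\begin{pmatrix} 0 & -\mathbf v^T & 0\\ \mathbf u & 0 & -\mathbf v\\ 0 & \mathbf u^T & 0 \end{pmatrix},\quad {\cal B}_2=\begin{pmatrix} -(\mathbf u,\mathbf v) & (\mathbf v')^T & 0\\ \mathbf u' & \mathbf u\mathbf v^T-\mathbf v\mathbf u^T+A & \mathbf v'\\ 0 & (\mathbf u')^T & (\mathbf u,\mathbf v) \end{pmatrix}, \] and ${\cal B}=\zeta{\cal B}_0+{\cal B}_1$. Then: (a) The system \[ \mathbf u''+2(\mathbf u,\mathbf v)\mathbf u-(\mathbf u,\mathbf u)\mathbf v+\tfrac12 z\mathbf u+A\mathbf u=0,\qquad \mathbf v''+2(\mathbf u,\mathbf v)\mathbf v-(\mathbf v,\mathbf v)\mathbf u+\tfrac12 z\mathbf v-A\mathbf v=0 \] admits the isomonodromic Lax representation ${\cal A}'={\cal B}_\zeta+[{\cal B},{\cal A}]$ with ${\cal A}=(2\zeta^2+z){\cal B}_0+2\zeta{\cal B}_1+2{\cal B}_2$. (b) The system \[ \mathbf u''+2(\mathbf u,\mathbf v)\mathbf u-(\mathbf u,\mathbf u)\mathbf v+\tfrac12 (z\mathbf u)'+A\mathbf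 u=0,\qquad \mathbf v''+2(\mathbf u,\mathbf v)\mathbf v-(\mathbf v,\mathbf v)\mathbf u-\tfrac12 (z\mathbf v)'-A\mathbf v=0 \] admits the isomonodromic Lax representation ${\cal A}'={\cal B}_\zeta+[{\cal B},{\cal A}]$ with ${\cal A}=(2+z\zeta^{-1})(\zeta{\cal B}_0+{\cal B}_1)+2\zeta^{-1}{\cal B}_2$.
   Context: Primes denote derivatives with respect to $z$; $\zeta$ is a spectral parameter independent of $z$; $(\cdot,\cdot)$ is the standard scalar product on $\mathbb R^n$. "Admits the Lax representation" means the matrix equation holds identically in $\zeta$ by virtue of the system. *)

theory Defs
  imports "HOL-Analysis.Analysis"
begin

text \<open>Block index set of size 1 + n + 1: the first row/column (Top),
  the middle block indexed by 'n (Mid i), and the last row/column (Bot).\<close>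
datatype 'n bidx = Top | Mid 'n | Bot

lemma UNIV_bidx: "(UNIV :: 'a bidx set) = insert Top (insert Bot (range Mid))"
  by (auto, case_tac x, auto)

instance bidx :: (finite) finite
  by standard (simp add: UNIV_bidx)

type_synonym 'n bmat = "complex ^ 'n bidx ^ 'n bidx"

definition B0 :: "('n::finite) bmat" where
  "B0 = (\<chi> i j. if i = j then (case i of Top \<Rightarrow> -1 | Mid _ \<Rightarrow> 0 | Bot \<Rightarrow> 1) else 0)"

definition B1 :: "real ^ ('n::finite) \<Rightarrow> real ^ 'n \<Rightarrow> 'n bmat" where
  "B1 a b = (\<chi> i j. case (i, j) of
      (Top, Mid k) \<Rightarrow> complex_of_real (- (b $ k))
    | (Mid k, Top) \<Rightarrow> complex_of_real (a $ k)
    | (Mid k, Bot) \<Rightarrow> complex_of_real (- (b $ k))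
    | (Bot, Mid k) \<Rightarrow> complex_of_real (a $ k)
    | _ \<Rightarrow> 0)"

text \<open>B2 a b a' b' M, where a' and b' stand for the z-derivatives of a and b.\<close>
definition B2 :: "real ^ ('n::finite) \<Rightarrow> real ^ 'n \<Rightarrow> real ^ 'n \<Rightarrow> real ^ 'n
    \<Rightarrow> real ^ 'n ^ 'n \<Rightarrow> 'n bmat" where
  "B2 a b a' b' M = (\<chi> i j. case (i, j) of
      (Top, Top) \<Rightarrow> complex_of_real (- (a \<bullet> b))
    | (Top, Mid k) \<Rightarrow> complex_of_real (b' $ k)
    | (Mid k, Top) \<Rightarrow> complex_of_real (a' $ k)
    | (Mid k, Mid l) \<Rightarrow> complex_of_real (a $ k * b $ l - b $ k * a $ l + M $ k $ l)
    | (Mid k, Bot) \<Rightarrow> complex_of_real (b' $ k)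
    | (Bot, Mid k) \<Rightarrow> complex_of_real (a' $ k)
    | (Bot, Bot) \<Rightarrow> complex_of_real (a \<bullet> b)
    | _ \<Rightarrow> 0)"

definition mscale :: "complex \<Rightarrow> ('n::finite) bmat \<Rightarrow> 'n bmat" (infixr "*m" 75) where
  "c *m M = (\<chi> i j. c * M $ i $ j)"

definition commutator :: "('n::finite) bmat \<Rightarrow> 'n bmat \<Rightarrow> 'n bmat" where
  "commutator X Y = X ** Y - Y ** X"

end

theory Submission
  imports Defs
begin

lemma sum_bidx: fixes f :: "('n::finite) bidx \<Rightarrow> 'b::comm_monoid_add"
  shows "(\<Sum>x\<in>UNIV. f x) = f Top + f Bot + (\<Sum>k\<in>UNIV. f (Mid k))"
proof -
  have "(\<Sum>x\<in>UNIV. f x) = (\<Sum>x\<in>insert Top (insert Bot (range Mid)). f x)" by (simp add: UNIV_bidx)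
  also have "\<dots> = f Top + (f Bot + sum f (range Mid))" by (simp add: image_iff)
  also have "sum f (range Mid) = (\<Sum>k\<in>UNIV. f (Mid k))" by (subst sum.reindex) (auto intro: injI)
  finally show ?thesis by (simp add: add.assoc)
qed

lemma B0_simps[simp]:
  "B0 $ Top $ Top = -1" "B0 $ Bot $ Bot = 1" "B0 $ Top $ Bot = 0" "B0 $ Bot $ Top = 0"
  "B0 $ Mid k $ j = 0" "B0 $ i $ Mid k = 0"
  by (auto simp: B0_def split: bidx.splits)

lemma B1_simps[simp]:
  "B1 a b $ Top $ Top = 0" "B1 a b $ Bot $ Bot = 0" "B1 a b $ Top $ Bot = 0" "B1 a b $ Bot $ Top = 0"
  "B1 a b $ Mid k $ Mid l = 0"
  "B1 a b $ Top $ Mid k = - of_real (b $ k)" "B1 a b $ Mid k $ Top = of_real (a $ k)"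
  "B1 a b $ Mid k $ Bot = - of_real (b $ k)" "B1 a b $ Bot $ Mid k = of_real (a $ k)"
  by (auto simp: B1_def)

lemma B2_simps[simp]:
  "B2 a b a' b' M $ Top $ Top = - of_real (a \<bullet> b)" "B2 a b a' b' M $ Bot $ Bot = of_real (a \<bullet> b)"
  "B2 a b a' b' M $ Top $ Bot = 0" "B2 a b a' b' M $ Bot $ Top = 0"
  "B2 a b a' b' M $ Mid k $ Mid l = of_real (a $ k * b $ l - b $ k * a $ l + M $ k $ l)"
  "B2 a b a' b' M $ Top $ Mid k = of_real (b' $ k)" "B2 a b a' b' M $ Mid k $ Top = of_real (a' $ k)"
  "B2 a b a' b' M $ Mid k $ Bot = of_real (b' $ k)" "B2 a b a' b' M $ Bot $ Mid k = of_real (a' $ k)"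
  by (auto simp: B2_def)

lemma mscale_nth[simp]: "(c *m M) $ i $ j = c * M $ i $ j"
  by (simp add: mscale_def)


lemma vec_hvd:
  assumes "\<And>i. ((\<lambda>w. f w $ i) has_vector_derivative f' $ i) F"
  shows "(f has_vector_derivative f') F"
  using assms unfolding has_vector_derivative_def has_derivative_def
  apply (auto intro!: bounded_linear_scaleR_left vec_tendstoI)
  done

lemma hvd_of_real:
  fixes f :: "real \<Rightarrow> real"
  shows "(f has_vector_derivative D) F \<Longrightarrow> ((\<lambda>x. complex_of_real (f x)) has_vector_derivative of_real D) F"
  by (rule bounded_linear.has_vector_derivative[OF bounded_linear_of_real])

lemma partA:
  fixes u v u1 v1 u2 v2 :: "real \<Rightarrow> real ^ ('n::finite)"
    and A :: "real ^ 'n ^ 'n"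
  assumes skew: "transpose A = - A"
    and du: "(u has_vector_derivative u1 z) (at z)"
    and du1: "(u1 has_vector_derivative u2 z) (at z)"
    and dv: "(v has_vector_derivative v1 z) (at z)"
    and dv1: "(v1 has_vector_derivative v2 z) (at z)"
    and eu: "u2 z + (2 * (u z \<bullet> v z)) *\<^sub>R u z - (u z \<bullet> u z) *\<^sub>R v z
          + (z / 2) *\<^sub>R u z + A *v u z = 0"
    and ev: "v2 z + (2 * (u z \<bullet> v z)) *\<^sub>R v z - (v z \<bullet> v z) *\<^sub>R u z
          + (z / 2) *\<^sub>R v z - A *v v z = 0"
  shows "((\<lambda>w. (2 * \<zeta>^2 + complex_of_real w) *m B0 + (2 * \<zeta>) *m B1 (u w) (v w)
                  + 2 *m B2 (u w) (v w) (u1 w) (v1 w) A)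
           has_vector_derivative
             (B0 + commutator (\<zeta> *m B0 + B1 (u z) (v z))
                 ((2 * \<zeta>^2 + complex_of_real z) *m B0 + (2 * \<zeta>) *m B1 (u z) (v z)
                  + 2 *m B2 (u z) (v z) (u1 z) (v1 z) A))) (at z)"
proof -
  have sk: "A $ k $ l = - (A $ l $ k)" for k l
    using arg_cong[OF skew, of "\<lambda>M. M $ l $ k"] by (simp add: transpose_def)
  have Av: "(A *v x) $ l = (\<Sum>k\<in>UNIV. A $ l $ k * x $ k)" for x l
    by (simp add: matrix_vector_mult_def)
  have Avt: "(A *v x) $ l = - (\<Sum>k\<in>UNIV. A $ k $ l * x $ k)" for x l
  proof -
    have "(\<Sum>k\<in>UNIV. A $ l $ k * x $ k) = (\<Sum>k\<in>UNIV. - (A $ k $ l * x $ k))"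
      by (rule sum.cong) (auto simp: sk[of l])
    then show ?thesis by (simp add: matrix_vector_mult_def sum_negf)
  qed
  have u2: "u2 z $ l = - (2 * (u z \<bullet> v z) * u z $ l) + (u z \<bullet> u z) * v z $ l - z / 2 * u z $ l - (A *v u z) $ l" for l
  proof -
    have "(u2 z + (2 * (u z \<bullet> v z)) *\<^sub>R u z - (u z \<bullet> u z) *\<^sub>R v z
          + (z / 2) *\<^sub>R u z + A *v u z) $ l = 0" using eu by simp
    then show ?thesis by simp
  qed
  have v2: "v2 z $ l = - (2 * (u z \<bullet> v z) * v z $ l) + (v z \<bullet> v z) * u z $ l - z / 2 * v z $ l + (A *v v z) $ l" for l
  proof -
    have "(v2 z + (2 * (u z \<bullet> v z)) *\<^sub>R v z - (v z \<bullet> v z) *\<^sub>R u z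
          + (z / 2) *\<^sub>R v z - A *v v z) $ l = 0" using ev by simp
    then show ?thesis by simp
  qed
  have hu: "((\<lambda>w. u w $ k) has_vector_derivative u1 z $ k) (at z)" for k
    by (rule bounded_linear.has_vector_derivative[OF bounded_linear_vec_nth du])
  have hv: "((\<lambda>w. v w $ k) has_vector_derivative v1 z $ k) (at z)" for k
    by (rule bounded_linear.has_vector_derivative[OF bounded_linear_vec_nth dv])
  have hu1: "((\<lambda>w. u1 w $ k) has_vector_derivative u2 z $ k) (at z)" for k
    by (rule bounded_linear.has_vector_derivative[OF bounded_linear_vec_nth du1])
  have hv1: "((\<lambda>w. v1 w $ k) has_vector_derivative v2 z $ k) (at z)" for k
    by (rule bounded_linear.has_vector_derivative[OF bounded_linear_vec_nth dv1])
  have huv: "((\<lambda>w. u w \<bullet> v w) has_vector_derivative (u z \<bullet> v1 z + u1 z \<bullet> v z)) (at z)"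
    by (rule bounded_bilinear.has_vector_derivative[OF bounded_bilinear_inner du dv])
  have hid: "((\<lambda>w. complex_of_real w) has_vector_derivative 1) (at z)"
    using hvd_of_real[OF has_vector_derivative_id] by simp
  note ds = hu hv hu1 hv1 huv hid
  show ?thesis
  proof (rule vec_hvd, rule vec_hvd)
    fix i j
    show "((\<lambda>w. ((2 * \<zeta>^2 + complex_of_real w) *m B0 + (2 * \<zeta>) *m B1 (u w) (v w)
                  + 2 *m B2 (u w) (v w) (u1 w) (v1 w) A) $ i $ j)
           has_vector_derivative
             (B0 + commutator (\<zeta> *m B0 + B1 (u z) (v z))
                 ((2 * \<zeta>^2 + complex_of_real z) *m B0 + (2 * \<zeta>) *m B1 (u z) (v z)
                  + 2 *m B2 (u z) (v z) (u1 z) (v1 z) A)) $ i $ j) (at z)"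
      apply (cases i; cases j)
      subgoal by (simp add: commutator_def matrix_matrix_mult_def sum_bidx, rule has_vector_derivative_eq_rhs, (rule ds hvd_of_real has_vector_derivative_add has_vector_derivative_diff has_vector_derivative_minus has_vector_derivative_mult_right has_vector_derivative_mult has_vector_derivative_const)+,
        simp add: u2 v2 Av inner_vec_def inner_real_def algebra_simps sum_distrib_left sum_distrib_right sum.distrib sum_subtractf sum_negf power2_eq_square)
      subgoal by (simp add: commutator_def matrix_matrix_mult_def sum_bidx, rule has_vector_derivative_eq_rhs, (rule ds hvd_of_real has_vector_derivative_add has_vector_derivative_diff has_vector_derivative_minus has_vector_derivative_mult_right has_vector_derivative_mult has_vector_derivative_const)+,
        simp add: u2 v2 Avt inner_vec_def inner_real_def algebra_simps sum_distrib_left sum_distrib_right sum.distrib sum_subtractf sum_negf power2_eq_square)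
      subgoal by (simp add: commutator_def matrix_matrix_mult_def sum_bidx, rule has_vector_derivative_eq_rhs, (rule ds hvd_of_real has_vector_derivative_add has_vector_derivative_diff has_vector_derivative_minus has_vector_derivative_mult_right has_vector_derivative_mult has_vector_derivative_const)+,
        simp add: u2 v2 Av inner_vec_def inner_real_def algebra_simps sum_distrib_left sum_distrib_right sum.distrib sum_subtractf sum_negf power2_eq_square)
      subgoal by (simp add: commutator_def matrix_matrix_mult_def sum_bidx, rule has_vector_derivative_eq_rhs, (rule ds hvd_of_real has_vector_derivative_add has_vector_derivative_diff has_vector_derivative_minus has_vector_derivative_mult_right has_vector_derivative_mult has_vector_derivative_const)+,
        simp add: u2 v2 Av inner_vec_def inner_real_def algebra_simps sum_distrib_left sum_distrib_right sum.distrib sum_subtractf sum_negf power2_eq_square)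
      subgoal by (simp add: commutator_def matrix_matrix_mult_def sum_bidx, rule has_vector_derivative_eq_rhs, (rule ds hvd_of_real has_vector_derivative_add has_vector_derivative_diff has_vector_derivative_minus has_vector_derivative_mult_right has_vector_derivative_mult has_vector_derivative_const)+,
        simp add: u2 v2 Av inner_vec_def inner_real_def algebra_simps sum_distrib_left sum_distrib_right sum.distrib sum_subtractf sum_negf power2_eq_square)
      subgoal by (simp add: commutator_def matrix_matrix_mult_def sum_bidx, rule has_vector_derivative_eq_rhs, (rule ds hvd_of_real has_vector_derivative_add has_vector_derivative_diff has_vector_derivative_minus has_vector_derivative_mult_right has_vector_derivative_mult has_vector_derivative_const)+,
        simp add: u2 v2 Av inner_vec_def inner_real_def algebra_simps sum_distrib_left sum_distrib_right sum.distrib sum_subtractf sum_negf power2_eq_square)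
      subgoal by (simp add: commutator_def matrix_matrix_mult_def sum_bidx, rule has_vector_derivative_eq_rhs, (rule ds hvd_of_real has_vector_derivative_add has_vector_derivative_diff has_vector_derivative_minus has_vector_derivative_mult_right has_vector_derivative_mult has_vector_derivative_const)+,
        simp add: u2 v2 Av inner_vec_def inner_real_def algebra_simps sum_distrib_left sum_distrib_right sum.distrib sum_subtractf sum_negf power2_eq_square)
      subgoal by (simp add: commutator_def matrix_matrix_mult_def sum_bidx, rule has_vector_derivative_eq_rhs, (rule ds hvd_of_real has_vector_derivative_add has_vector_derivative_diff has_vector_derivative_minus has_vector_derivative_mult_right has_vector_derivative_mult has_vector_derivative_const)+,
        simp add: u2 v2 Avt inner_vec_def inner_real_def algebra_simps sum_distrib_left sum_distrib_right sum.distrib sum_subtractf sum_negf power2_eq_square)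
      subgoal by (simp add: commutator_def matrix_matrix_mult_def sum_bidx, rule has_vector_derivative_eq_rhs, (rule ds hvd_of_real has_vector_derivative_add has_vector_derivative_diff has_vector_derivative_minus has_vector_derivative_mult_right has_vector_derivative_mult has_vector_derivative_const)+,
        simp add: u2 v2 Av inner_vec_def inner_real_def algebra_simps sum_distrib_left sum_distrib_right sum.distrib sum_subtractf sum_negf power2_eq_square)
      done
  qed
qed

lemma partB:
  fixes u v u1 v1 u2 v2 :: "real \<Rightarrow> real ^ ('n::finite)"
    and A :: "real ^ 'n ^ 'n"
  assumes skew: "transpose A = - A"
    and du: "(u has_vector_derivative u1 z) (at z)"
    and du1: "(u1 has_vector_derivative u2 z) (at z)"
    and dv: "(v has_vector_derivative v1 z) (at z)"
    and dv1: "(v1 has_vector_derivative v2 z) (at z)"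
    and eu: "u2 z + (2 * (u z \<bullet> v z)) *\<^sub>R u z - (u z \<bullet> u z) *\<^sub>R v z
          + (1 / 2) *\<^sub>R (u z + z *\<^sub>R u1 z) + A *v u z = 0"
    and ev: "v2 z + (2 * (u z \<bullet> v z)) *\<^sub>R v z - (v z \<bullet> v z) *\<^sub>R u z
          - (1 / 2) *\<^sub>R (v z + z *\<^sub>R v1 z) - A *v v z = 0"
  and nz: "\<zeta> \<noteq> 0"
  shows "((\<lambda>w. (2 + complex_of_real w / \<zeta>) *m (\<zeta> *m B0 + B1 (u w) (v w))
                  + (2 / \<zeta>) *m B2 (u w) (v w) (u1 w) (v1 w) A)
           has_vector_derivative
             (B0 + commutator (\<zeta> *m B0 + B1 (u z) (v z))
                 ((2 + complex_of_real z / \<zeta>) *m (\<zeta> *m B0 + B1 (u z) (v z))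
                  + (2 / \<zeta>) *m B2 (u z) (v z) (u1 z) (v1 z) A))) (at z)"
proof -
  have sk: "A $ k $ l = - (A $ l $ k)" for k l
    using arg_cong[OF skew, of "\<lambda>M. M $ l $ k"] by (simp add: transpose_def)
  have Av: "(A *v x) $ l = (\<Sum>k\<in>UNIV. A $ l $ k * x $ k)" for x l
    by (simp add: matrix_vector_mult_def)
  have Avt: "(A *v x) $ l = - (\<Sum>k\<in>UNIV. A $ k $ l * x $ k)" for x l
  proof -
    have "(\<Sum>k\<in>UNIV. A $ l $ k * x $ k) = (\<Sum>k\<in>UNIV. - (A $ k $ l * x $ k))"
      by (rule sum.cong) (auto simp: sk[of l])
    then show ?thesis by (simp add: matrix_vector_mult_def sum_negf)
  qed
  have u2: "u2 z $ l = - (2 * (u z \<bullet> v z) * u z $ l) + (u z \<bullet> u z) * v z $ l - (u z $ l + z * u1 z $ l) / 2 - (A *v u z) $ l" for l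
  proof -
    have "(u2 z + (2 * (u z \<bullet> v z)) *\<^sub>R u z - (u z \<bullet> u z) *\<^sub>R v z
          + (1 / 2) *\<^sub>R (u z + z *\<^sub>R u1 z) + A *v u z) $ l = 0" using eu by simp
    then show ?thesis by simp
  qed
  have v2: "v2 z $ l = - (2 * (u z \<bullet> v z) * v z $ l) + (v z \<bullet> v z) * u z $ l + (v z $ l + z * v1 z $ l) / 2 + (A *v v z) $ l" for l
  proof -
    have "(v2 z + (2 * (u z \<bullet> v z)) *\<^sub>R v z - (v z \<bullet> v z) *\<^sub>R u z
          - (1 / 2) *\<^sub>R (v z + z *\<^sub>R v1 z) - A *v v z) $ l = 0" using ev by simp
    then show ?thesis by simp
  qed
  have hu: "((\<lambda>w. u w $ k) has_vector_derivative u1 z $ k) (at z)" for k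
    by (rule bounded_linear.has_vector_derivative[OF bounded_linear_vec_nth du])
  have hv: "((\<lambda>w. v w $ k) has_vector_derivative v1 z $ k) (at z)" for k
    by (rule bounded_linear.has_vector_derivative[OF bounded_linear_vec_nth dv])
  have hu1: "((\<lambda>w. u1 w $ k) has_vector_derivative u2 z $ k) (at z)" for k
    by (rule bounded_linear.has_vector_derivative[OF bounded_linear_vec_nth du1])
  have hv1: "((\<lambda>w. v1 w $ k) has_vector_derivative v2 z $ k) (at z)" for k
    by (rule bounded_linear.has_vector_derivative[OF bounded_linear_vec_nth dv1])
  have huv: "((\<lambda>w. u w \<bullet> v w) has_vector_derivative (u z \<bullet> v1 z + u1 z \<bullet> v z)) (at z)"
    by (rule bounded_bilinear.has_vector_derivative[OF bounded_bilinear_inner du dv])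
  have hid: "((\<lambda>w. complex_of_real w) has_vector_derivative 1) (at z)"
    using hvd_of_real[OF has_vector_derivative_id] by simp
  obtain e where e: "inverse \<zeta> = e" by blast
  have ze: "\<zeta> * e = 1" "e * \<zeta> = 1" "\<zeta> * (e * x) = x" "e * (\<zeta> * x) = x" for x
    using nz e by (auto simp: mult.assoc[symmetric])
  have dz: "x / \<zeta> = x * e" for x using e by (simp add: divide_inverse)
  note ds = hu hv hu1 hv1 huv hid
  show ?thesis
  proof (rule vec_hvd, rule vec_hvd)
    fix i j
    show "((\<lambda>w. ((2 + complex_of_real w / \<zeta>) *m (\<zeta> *m B0 + B1 (u w) (v w))
                  + (2 / \<zeta>) *m B2 (u w) (v w) (u1 w) (v1 w) A) $ i $ j)
           has_vector_derivative
             (B0 + commutator (\<zeta> *m B0 + B1 (u z) (v z))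
                 ((2 + complex_of_real z / \<zeta>) *m (\<zeta> *m B0 + B1 (u z) (v z))
                  + (2 / \<zeta>) *m B2 (u z) (v z) (u1 z) (v1 z) A)) $ i $ j) (at z)"
      apply (cases i; cases j)
      subgoal by (simp add: commutator_def matrix_matrix_mult_def sum_bidx, rule has_vector_derivative_eq_rhs, (rule ds hvd_of_real has_vector_derivative_add has_vector_derivative_diff has_vector_derivative_minus has_vector_derivative_mult_right has_vector_derivative_mult has_vector_derivative_const has_vector_derivative_divide)+,
        simp add: u2 v2 Av inner_vec_def inner_real_def algebra_simps sum_distrib_left sum_distrib_right sum.distrib sum_subtractf sum_negf power2_eq_square dz ze)
      subgoal by (simp add: commutator_def matrix_matrix_mult_def sum_bidx, rule has_vector_derivative_eq_rhs, (rule ds hvd_of_real has_vector_derivative_add has_vector_derivative_diff has_vector_derivative_minus has_vector_derivative_mult_right has_vector_derivative_mult has_vector_derivative_const has_vector_derivative_divide)+,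
        simp add: u2 v2 Avt inner_vec_def inner_real_def algebra_simps sum_distrib_left sum_distrib_right sum.distrib sum_subtractf sum_negf power2_eq_square dz ze)
      subgoal by (simp add: commutator_def matrix_matrix_mult_def sum_bidx, rule has_vector_derivative_eq_rhs, (rule ds hvd_of_real has_vector_derivative_add has_vector_derivative_diff has_vector_derivative_minus has_vector_derivative_mult_right has_vector_derivative_mult has_vector_derivative_const has_vector_derivative_divide)+,
        simp add: u2 v2 Av inner_vec_def inner_real_def algebra_simps sum_distrib_left sum_distrib_right sum.distrib sum_subtractf sum_negf power2_eq_square dz ze)
      subgoal by (simp add: commutator_def matrix_matrix_mult_def sum_bidx, rule has_vector_derivative_eq_rhs, (rule ds hvd_of_real has_vector_derivative_add has_vector_derivative_diff has_vector_derivative_minus has_vector_derivative_mult_right has_vector_derivative_mult has_vector_derivative_const has_vector_derivative_divide)+,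
        simp add: u2 v2 Av inner_vec_def inner_real_def algebra_simps sum_distrib_left sum_distrib_right sum.distrib sum_subtractf sum_negf power2_eq_square dz ze)
      subgoal by (simp add: commutator_def matrix_matrix_mult_def sum_bidx, rule has_vector_derivative_eq_rhs, (rule ds hvd_of_real has_vector_derivative_add has_vector_derivative_diff has_vector_derivative_minus has_vector_derivative_mult_right has_vector_derivative_mult has_vector_derivative_const has_vector_derivative_divide)+,
        simp add: u2 v2 Av inner_vec_def inner_real_def algebra_simps sum_distrib_left sum_distrib_right sum.distrib sum_subtractf sum_negf power2_eq_square dz ze)
      subgoal by (simp add: commutator_def matrix_matrix_mult_def sum_bidx, rule has_vector_derivative_eq_rhs, (rule ds hvd_of_real has_vector_derivative_add has_vector_derivative_diff has_vector_derivative_minus has_vector_derivative_mult_right has_vector_derivative_mult has_vector_derivative_const has_vector_derivative_divide)+,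
        simp add: u2 v2 Av inner_vec_def inner_real_def algebra_simps sum_distrib_left sum_distrib_right sum.distrib sum_subtractf sum_negf power2_eq_square dz ze)
      subgoal by (simp add: commutator_def matrix_matrix_mult_def sum_bidx, rule has_vector_derivative_eq_rhs, (rule ds hvd_of_real has_vector_derivative_add has_vector_derivative_diff has_vector_derivative_minus has_vector_derivative_mult_right has_vector_derivative_mult has_vector_derivative_const has_vector_derivative_divide)+,
        simp add: u2 v2 Av inner_vec_def inner_real_def algebra_simps sum_distrib_left sum_distrib_right sum.distrib sum_subtractf sum_negf power2_eq_square dz ze)
      subgoal by (simp add: commutator_def matrix_matrix_mult_def sum_bidx, rule has_vector_derivative_eq_rhs, (rule ds hvd_of_real has_vector_derivative_add has_vector_derivative_diff has_vector_derivative_minus has_vector_derivative_mult_right has_vector_derivative_mult has_vector_derivative_const has_vector_derivative_divide)+,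
        simp add: u2 v2 Avt inner_vec_def inner_real_def algebra_simps sum_distrib_left sum_distrib_right sum.distrib sum_subtractf sum_negf power2_eq_square dz ze)
      subgoal by (simp add: commutator_def matrix_matrix_mult_def sum_bidx, rule has_vector_derivative_eq_rhs, (rule ds hvd_of_real has_vector_derivative_add has_vector_derivative_diff has_vector_derivative_minus has_vector_derivative_mult_right has_vector_derivative_mult has_vector_derivative_const has_vector_derivative_divide)+,
        simp add: u2 v2 Av inner_vec_def inner_real_def algebra_simps sum_distrib_left sum_distrib_right sum.distrib sum_subtractf sum_negf power2_eq_square dz ze)
      done
  qed
qed

theorem mainTheorem10:
  fixes u v u1 v1 u2 v2 :: "real \<Rightarrow> real ^ ('n::finite)"
    and A :: "real ^ 'n ^ 'n" and S :: "real set"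
  assumes "open S"
    and skew: "transpose A = - A"
    and du: "\<forall>z\<in>S. (u has_vector_derivative u1 z) (at z)"
    and du1: "\<forall>z\<in>S. (u1 has_vector_derivative u2 z) (at z)"
    and dv: "\<forall>z\<in>S. (v has_vector_derivative v1 z) (at z)"
    and dv1: "\<forall>z\<in>S. (v1 has_vector_derivative v2 z) (at z)"
  shows
   "((\<forall>z\<in>S.
        u2 z + (2 * (u z \<bullet> v z)) *\<^sub>R u z - (u z \<bullet> u z) *\<^sub>R v z
          + (z / 2) *\<^sub>R u z + A *v u z = 0 \<and>
        v2 z + (2 * (u z \<bullet> v z)) *\<^sub>R v z - (v z \<bullet> v z) *\<^sub>R u z
          + (z / 2) *\<^sub>R v z - A *v v z = 0)
     \<longrightarrow> (\<forall>z\<in>S. \<forall>\<zeta>::complex.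
          ((\<lambda>w. (2 * \<zeta>^2 + complex_of_real w) *m B0 + (2 * \<zeta>) *m B1 (u w) (v w)
                  + 2 *m B2 (u w) (v w) (u1 w) (v1 w) A)
           has_vector_derivative
             (B0 + commutator (\<zeta> *m B0 + B1 (u z) (v z))
                 ((2 * \<zeta>^2 + complex_of_real z) *m B0 + (2 * \<zeta>) *m B1 (u z) (v z)
                  + 2 *m B2 (u z) (v z) (u1 z) (v1 z) A))) (at z)))
  \<and>
    ((\<forall>z\<in>S.
        u2 z + (2 * (u z \<bullet> v z)) *\<^sub>R u z - (u z \<bullet> u z) *\<^sub>R v z
          + (1 / 2) *\<^sub>R (u z + z *\<^sub>R u1 z) + A *v u z = 0 \<and>
        v2 z + (2 * (u z \<bullet> v z)) *\<^sub>R v z - (v z \<bullet> v z) *\<^sub>R u z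
          - (1 / 2) *\<^sub>R (v z + z *\<^sub>R v1 z) - A *v v z = 0)
     \<longrightarrow> (\<forall>z\<in>S. \<forall>\<zeta>::complex. \<zeta> \<noteq> 0 \<longrightarrow>
          ((\<lambda>w. (2 + complex_of_real w / \<zeta>) *m (\<zeta> *m B0 + B1 (u w) (v w))
                  + (2 / \<zeta>) *m B2 (u w) (v w) (u1 w) (v1 w) A)
           has_vector_derivative
             (B0 + commutator (\<zeta> *m B0 + B1 (u z) (v z))
                 ((2 + complex_of_real z / \<zeta>) *m (\<zeta> *m B0 + B1 (u z) (v z))
                  + (2 / \<zeta>) *m B2 (u z) (v z) (u1 z) (v1 z) A))) (at z)))"
proof (intro conjI impI ballI allI)
  fix z and \<zeta> :: complex
  assume h: "\<forall>z\<in>S.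
        u2 z + (2 * (u z \<bullet> v z)) *\<^sub>R u z - (u z \<bullet> u z) *\<^sub>R v z
          + (z / 2) *\<^sub>R u z + A *v u z = 0 \<and>
        v2 z + (2 * (u z \<bullet> v z)) *\<^sub>R v z - (v z \<bullet> v z) *\<^sub>R u z
          + (z / 2) *\<^sub>R v z - A *v v z = 0" and z: "z \<in> S"
  show "((\<lambda>w. (2 * \<zeta>^2 + complex_of_real w) *m B0 + (2 * \<zeta>) *m B1 (u w) (v w)
                  + 2 *m B2 (u w) (v w) (u1 w) (v1 w) A)
           has_vector_derivative
             (B0 + commutator (\<zeta> *m B0 + B1 (u z) (v z))
                 ((2 * \<zeta>^2 + complex_of_real z) *m B0 + (2 * \<zeta>) *m B1 (u z) (v z)
                  + 2 *m B2 (u z) (v z) (u1 z) (v1 z) A))) (at z)"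
    using h z du dv du1 dv1 by (intro partA[OF skew]) auto
next
  fix z and \<zeta> :: complex
  assume h: "\<forall>z\<in>S.
        u2 z + (2 * (u z \<bullet> v z)) *\<^sub>R u z - (u z \<bullet> u z) *\<^sub>R v z
          + (1 / 2) *\<^sub>R (u z + z *\<^sub>R u1 z) + A *v u z = 0 \<and>
        v2 z + (2 * (u z \<bullet> v z)) *\<^sub>R v z - (v z \<bullet> v z) *\<^sub>R u z
          - (1 / 2) *\<^sub>R (v z + z *\<^sub>R v1 z) - A *v v z = 0" and z: "z \<in> S"
    and nz: "\<zeta> \<noteq> 0"
  show "((\<lambda>w. (2 + complex_of_real w / \<zeta>) *m (\<zeta> *m B0 + B1 (u w) (v w))
                  + (2 / \<zeta>) *m B2 (u w) (v w) (u1 w) (v1 w) A)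
           has_vector_derivative
             (B0 + commutator (\<zeta> *m B0 + B1 (u z) (v z))
                 ((2 + complex_of_real z / \<zeta>) *m (\<zeta> *m B0 + B1 (u z) (v z))
                  + (2 / \<zeta>) *m B2 (u z) (v z) (u1 z) (v1 z) A))) (at z)"
    using h z du dv du1 dv1 nz by (intro partB[OF skew]) auto
qed

end
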